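(* Let $t$ be an odd prime and let $n\geq 1$ be an integer that is a quadratic nonresidue modulo $t$. Then for every $0\leq i\leq t-1$, \[ \overline{N}_{t-1}(i,t,n)=\frac{\overline{p}_{t-1}(n)}{t}\equiv 0 \pmod 2 . \] In particular, $\overline{p}_{t-1}(n)\equiv 0 \pmod{2t}$.
   Context: An overpartition of $n$ is a partition of $n$ in which the first occurrence of each distinct part size may be overlined. For an overpartition $\pi$, $\ell(\pi)$ denotes its total number of parts (overlined and non-overlined). A $(t-1)$-colored overpartition of $n$ is a tuple $\overrightarrow{\pi}=(\pi_1,\dots,\pi_{t-1})$ of overpartitions with $\sum_{k}|\pi_k|=n$, where $|\pi_k|$ is the sum of parts of $\pi_k$; $\overline{p}_{t-1}(n)$ denotes the number of such tuples. For such a tuple (with $t-1$ even) the multirank is \[ \overline{r}(\overrightarrow{\pi})=\sum_{k=1}^{(t-1)/2} k\bigl(\ell(\pi_k)-\ell(\pi_{t-k})\bigr). \] $\overline{N}_{t-1}(i,t,n)$ denotes the number of $(t-1)$-colored overpartitions of $n$ whose multirank $\overline{r}$ is congruent to $i$ modulo $t$. *)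

theory Defs
  imports "HOL-Library.Multiset" "HOL-Number_Theory.Number_Theory"
begin

text \<open>An overpartition is represented as a pair (M, O): M is the multiset of
  (positive) parts, O is the set of part sizes whose first occurrence is overlined
  (so O is a subset of the distinct part sizes).\<close>

type_synonym overpartition = "nat multiset \<times> nat set"

definition is_overpartition :: "overpartition \<Rightarrow> bool" where
  "is_overpartition \<pi> \<longleftrightarrow> 0 \<notin># fst \<pi> \<and> snd \<pi> \<subseteq> set_mset (fst \<pi>)"

definition op_size :: "overpartition \<Rightarrow> nat" where
  "op_size \<pi> = sum_mset (fst \<pi>)"

definition op_len :: "overpartition \<Rightarrow> nat" where
  "op_len \<pi> = size (fst \<pi>)"

definition colored_overpartitions :: "nat \<Rightarrow> nat \<Rightarrow> (nat \<Rightarrow> overpartition) set" where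
  "colored_overpartitions t n =
     {F. F \<in> {1..t-1} \<rightarrow>\<^sub>E Collect is_overpartition \<and> (\<Sum>k\<in>{1..t-1}. op_size (F k)) = n}"

definition pbar :: "nat \<Rightarrow> nat \<Rightarrow> nat" where
  "pbar t n = card (colored_overpartitions t n)"

definition multirank :: "nat \<Rightarrow> (nat \<Rightarrow> overpartition) \<Rightarrow> int" where
  "multirank t F =
     (\<Sum>k\<in>{1..(t-1) div 2}. int k * (int (op_len (F k)) - int (op_len (F (t - k)))))"

definition Nbar :: "int \<Rightarrow> nat \<Rightarrow> nat \<Rightarrow> nat" where
  "Nbar i t n = card {F \<in> colored_overpartitions t n. [multirank t F = i] (mod int t)}"

end

theory Submission
  imports Defs "HOL-Computational_Algebra.Polynomial_FPS"
begin
unbundle fps_syntax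
declare [[simproc del: poly_fps_eq]]

fun gb :: "'a::comm_ring_1 \<Rightarrow> nat \<Rightarrow> nat \<Rightarrow> 'a" where
  "gb Q 0 k = (if k = 0 then 1 else 0)"
| "gb Q (Suc N) k = gb Q N k + (if k = 0 then 0 else Q^(Suc N - k) * gb Q N (k-1))"

lemma gb_zero: "N < k \<Longrightarrow> gb Q N k = 0"
  by (induction N arbitrary: k) auto

lemma gb_0 [simp]: "gb Q N 0 = 1"
  by (induction N) auto

lemma cauchy:
  "(\<Sum>k\<le>N. (-1)^k * Q^(k*(k-1) div 2) * gb Q N k * z^k * w^(N-k)) = (\<Prod>i<N. w - z*Q^i)"
proof (induction N)
  case 0
  then show ?case by simp
next
  case (Suc N)
  define f where "f k = (-1)^k * Q^(k*(k-1) div 2) * gb Q N k * z^k * w^(N-k)" for k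
  have A: "(\<Sum>k\<le>Suc N. (-1)^k * Q^(k*(k-1) div 2) * gb Q N k * z^k * w^(Suc N-k)) = w * (\<Sum>k\<le>N. f k)"
    by (simp add: gb_zero sum_distrib_left f_def Suc_diff_le mult_ac)
  have B: "(\<Sum>k\<le>Suc N. (-1)^k * Q^(k*(k-1) div 2) * (if k = 0 then 0 else Q^(Suc N - k) * gb Q N (k-1)) * z^k * w^(Suc N-k))
     = (\<Sum>k\<le>N. (-1)^(Suc k) * Q^(Suc k*k div 2) * (Q^(N - k) * gb Q N k) * z^(Suc k) * w^(N-k))"
    by (subst sum.atMost_Suc_shift) simp
  have C: "\<And>k. k \<le> N \<Longrightarrow> (-1)^(Suc k) * Q^(Suc k*k div 2) * (Q^(N - k) * gb Q N k) * z^(Suc k) * w^(N-k)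
      = - (z * Q^N) * f k"
  proof -
    fix k assume k: "k \<le> N"
    have e: "Suc k * k div 2 + (N - k) = k*(k-1) div 2 + N"
    proof -
      have "Suc k * k = k*(k-1) + 2*k" by (cases k) auto
      hence "Suc k * k div 2 = k*(k-1) div 2 + k" by simp
      thus ?thesis using k by simp
    qed
    have "Q^(Suc k*k div 2) * Q^(N - k) = Q^(k*(k-1) div 2) * Q^N"
      by (simp only: power_add[symmetric] e)
    thus "(-1)^(Suc k) * Q^(Suc k*k div 2) * (Q^(N - k) * gb Q N k) * z^(Suc k) * w^(N-k) = - (z * Q^N) * f k"
      unfolding f_def by (simp add: algebra_simps)
  qed
  have "(\<Sum>k\<le>Suc N. (-1)^k * Q^(k*(k-1) div 2) * gb Q (Suc N) k * z^k * w^(Suc N-k))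
     = (\<Sum>k\<le>Suc N. (-1)^k * Q^(k*(k-1) div 2) * gb Q N k * z^k * w^(Suc N-k))
     + (\<Sum>k\<le>Suc N. (-1)^k * Q^(k*(k-1) div 2) * (if k = 0 then 0 else Q^(Suc N - k) * gb Q N (k-1)) * z^k * w^(Suc N-k))"
    by (simp add: algebra_simps sum.distrib[symmetric])
  also have "\<dots> = w * (\<Sum>k\<le>N. f k) - (z * Q^N) * (\<Sum>k\<le>N. f k)"
    using A B C by (simp add: sum_distrib_left sum_negf)
  also have "\<dots> = (\<Prod>i<Suc N. w - z*Q^i)"
    using Suc by (simp add: f_def algebra_simps)
  finally show ?case .
qed

definition qp :: "'a::comm_ring_1 \<Rightarrow> nat \<Rightarrow> 'a" where
  "qp Q n = (\<Prod>i\<in>{1..n}. 1 - Q^i)"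

lemma qp_Suc: "qp Q (Suc n) = qp Q n * (1 - Q^Suc n)"
  by (simp add: qp_def)

lemma gb_prod: "k \<le> N \<Longrightarrow> gb Q N k * qp Q k * qp Q (N-k) = qp Q N"
proof (induction N arbitrary: k)
  case 0
  then show ?case by (simp add: qp_def)
next
  case (Suc N)
  show ?case
  proof (cases "k = 0")
    case True then show ?thesis by (simp add: qp_def)
  next
    case k0: False
    show ?thesis
    proof (cases "k = Suc N")
      case True
      have h: "gb Q N N * qp Q N = qp Q N" using Suc.IH[of N] by (simp add: qp_def)
      have g: "gb Q (Suc N) (Suc N) = gb Q N N" using gb_zero[of N "Suc N" Q] by simp
      have "gb Q (Suc N) (Suc N) * qp Q (Suc N) * qp Q (Suc N - Suc N) = (gb Q N N * qp Q N) * (1 - Q^Suc N)"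
        by (simp only: g qp_Suc diff_self_eq_0) (simp add: qp_def[of Q 0] mult.assoc)
      then show ?thesis using True h by (simp add: qp_Suc)
    next
      case False
      with Suc.prems have kN: "k \<le> N" by simp
      obtain k' where k': "k = Suc k'" using k0 by (cases k) auto
      have i1: "gb Q N k * qp Q k * qp Q (N-k) = qp Q N" using Suc.IH kN by simp
      have i2: "gb Q N k' * qp Q k' * qp Q (N-k') = qp Q N" using Suc.IH kN k' by simp
      have e1: "qp Q (Suc N - k) = qp Q (N-k) * (1 - Q^(Suc N - k))"
        using kN by (simp add: Suc_diff_le qp_Suc)
      have e2: "qp Q k = qp Q k' * (1 - Q^k)" using k' by (simp add: qp_Suc)
      have e3: "N - k' = Suc N - k" using k' by simp
      have g2: "gb Q (Suc N) k = gb Q N k + Q^(Suc N - k) * gb Q N k'" using k' by simp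
      have "gb Q (Suc N) k * qp Q k * qp Q (Suc N - k)
          = (gb Q N k * qp Q k * qp Q (N-k)) * (1 - Q^(Suc N - k))
            + Q^(Suc N - k) * (gb Q N k' * qp Q k' * qp Q (N-k')) * (1 - Q^k)"
        by (simp only: g2 e1 e2 e3) (simp add: algebra_simps)
      also have "\<dots> = qp Q N * (1 - Q^(Suc N - k)) + Q^(Suc N - k) * qp Q N * (1 - Q^k)"
        using i1 i2 by simp
      also have "\<dots> = qp Q N * (1 - Q^(Suc N - k) * Q^k)" by (simp add: algebra_simps)
      also have "Q^(Suc N - k) * Q^k = Q^(Suc N)" using kN by (simp add: power_add[symmetric])
      finally show ?thesis by (simp add: qp_Suc)
    qed
  qed
qed


definition eqm :: "nat \<Rightarrow> 'a::comm_ring_1 fps \<Rightarrow> 'a fps \<Rightarrow> bool" where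
  "eqm m f g \<longleftrightarrow> (\<forall>i<m. f $ i = g $ i)"

lemma eqm_refl[simp]: "eqm m f f" by (simp add: eqm_def)
lemma eqm_sym: "eqm m f g \<Longrightarrow> eqm m g f" by (simp add: eqm_def)
lemma eqm_trans: "eqm m f g \<Longrightarrow> eqm m g h \<Longrightarrow> eqm m f h" by (simp add: eqm_def)
lemma eqm_mono: "eqm m f g \<Longrightarrow> m' \<le> m \<Longrightarrow> eqm m' f g" by (simp add: eqm_def)

lemma eqm_mult: "eqm m f f' \<Longrightarrow> eqm m g g' \<Longrightarrow> eqm m (f*g) (f'*g')"
  unfolding eqm_def fps_mult_nth by (auto intro!: sum.cong)

lemma eqm_add: "eqm m f f' \<Longrightarrow> eqm m g g' \<Longrightarrow> eqm m (f+g) (f'+g')"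
  unfolding eqm_def by auto

lemma eqm_sum: "(\<And>x. x \<in> A \<Longrightarrow> eqm m (f x) (g x)) \<Longrightarrow> eqm m (sum f A) (sum g A)"
  unfolding eqm_def fps_sum_nth by (auto intro!: sum.cong)

lemma eqm_prod: "(\<And>x. x \<in> A \<Longrightarrow> eqm m (f x) (g x)) \<Longrightarrow> eqm m (prod f A) (prod g A)"
proof (induction A rule: infinite_finite_induct)
  case (insert x F)
  then show ?case by (simp add: eqm_mult)
qed auto

lemma eqm_Xpow: "m \<le> e \<Longrightarrow> eqm m (fps_X^e * f) 0"
  unfolding eqm_def by (simp add: fps_X_power_mult_nth)

lemma eqm_one_minus: "m \<le> e \<Longrightarrow> eqm m (1 - fps_X^e) 1"
  unfolding eqm_def by (simp add: fps_X_power_nth)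

lemma eqm_cancel:
  fixes R :: "'a::field fps"
  assumes "R $ 0 \<noteq> 0" "eqm m (f*R) (g*R)"
  shows "eqm m f g"
proof -
  have "eqm m ((f*R)*inverse R) ((g*R)*inverse R)" using assms(2) by (simp add: eqm_mult)
  thus ?thesis using inverse_mult_eq_1'[OF assms(1)] by (simp add: mult.assoc)
qed

subsection \<open>The finite theta identity\<close>

abbreviation XX :: "complex fps" where "XX \<equiv> fps_X"

definition Oq :: "nat \<Rightarrow> complex fps" where "Oq n = (\<Prod>i<n. 1 - XX^(2*i+1))"

definition dd :: "nat \<Rightarrow> nat \<Rightarrow> nat" where "dd k n = (if k \<le> n then n - k else k - n)"

lemma prod_lessThan_add: "(\<Prod>i<(n::nat)+m. f i) = (\<Prod>i<n. f i) * (\<Prod>i<m. f (n+i))"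
  by (induction m) (simp_all add: mult_ac)

lemma sum_odd: "(\<Sum>i<n. 2*i+1) = (n::nat)^2"
  by (induction n) (simp_all add: power2_eq_square algebra_simps)

lemma exp_identity:
  assumes "k \<le> 2*n"
  shows "2 * (k*(k-1) div 2) + k + 2*n*(2*n-k) = dd k n ^ 2 + 3*n^2"
proof -
  have ev: "even (k*(k-1))" by (simp; presburger)
  have "2 * (k*(k-1) div 2) + k = k*k"
    using ev by (cases k) (auto simp: algebra_simps)
  moreover have "k*k + 2*n*(2*n-k) = dd k n ^ 2 + 3*n^2"
  proof (cases "k \<le> n")
    case True
    then obtain d where d: "n = k + d" by (metis le_add_diff_inverse)
    have "2*n - k = k + 2*d" using d by simp
    thus ?thesis using d True by (simp add: dd_def power2_eq_square algebra_simps)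
  next
    case False
    then obtain d where d: "k = n + d" by (metis le_add_diff_inverse nat_le_linear)
    with assms have dn: "d \<le> n" by simp
    then obtain e where e: "n = d + e" by (metis le_add_diff_inverse)
    have "2*n - k = e" using d e by simp
    thus ?thesis using d e False by (simp add: dd_def power2_eq_square algebra_simps)
  qed
  ultimately show ?thesis by simp
qed

lemma finite_theta:
  "(\<Sum>k\<le>2*n. (-1)^k * XX^(dd k n ^ 2) * gb (XX^2) (2*n) k) = (-1)^n * Oq n * Oq n"
proof -
  have c: "(\<Sum>k\<le>2*n. (-1)^k * (XX^2)^(k*(k-1) div 2) * gb (XX^2) (2*n) k * XX^k * (XX^(2*n))^(2*n-k))
     = (\<Prod>i<2*n. XX^(2*n) - XX*(XX^2)^i)" by (rule cauchy)
  have l: "(\<Sum>k\<le>2*n. (-1)^k * (XX^2)^(k*(k-1) div 2) * gb (XX^2) (2*n) k * XX^k * (XX^(2*n))^(2*n-k))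
     = XX^(3*n^2) * (\<Sum>k\<le>2*n. (-1)^k * XX^(dd k n ^ 2) * gb (XX^2) (2*n) k)"
    unfolding sum_distrib_left
  proof (intro sum.cong refl)
    fix k assume "k \<in> {..2*n}"
    hence e: "2 * (k*(k-1) div 2) + k + 2*n*(2*n-k) = dd k n ^ 2 + 3*n^2" using exp_identity by simp
    have "(XX^2)^(k*(k-1) div 2) * XX^k * (XX^(2*n))^(2*n-k) = XX^(2 * (k*(k-1) div 2) + k + 2*n*(2*n-k))"
      by (simp add: power_mult[symmetric] power_add)
    also have "\<dots> = XX^(dd k n ^ 2 + 3*n^2)" by (simp only: e)
    also have "\<dots> = XX^(3*n^2) * XX^(dd k n ^ 2)" by (simp only: power_add mult.commute)
    finally show "(-1)^k * (XX^2)^(k*(k-1) div 2) * gb (XX^2) (2*n) k * XX^k * (XX^(2*n))^(2*n-k)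
        = XX^(3*n^2) * ((-1)^k * XX^(dd k n ^ 2) * gb (XX^2) (2*n) k)"
      by (simp add: mult_ac)
  qed
  have r1: "(\<Prod>i<n. XX^(2*n) - XX*(XX^2)^i) = (\<Prod>i<n. (- (XX^(2*i+1))) * (1 - XX^(2*(n - Suc i)+1)))"
  proof (intro prod.cong refl)
    fix i assume "i \<in> {..<n}"
    hence "2*n = (2*i+1) + (2*(n - Suc i)+1)" by simp
    hence "XX^(2*n) = XX^(2*i+1) * XX^(2*(n - Suc i)+1)" by (metis power_add)
    moreover have "XX*(XX^2)^i = XX^(2*i+1)" by (simp add: power_mult[symmetric])
    ultimately show "XX^(2*n) - XX*(XX^2)^i = (- (XX^(2*i+1))) * (1 - XX^(2*(n - Suc i)+1))"
      by (simp add: algebra_simps)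
  qed
  have r1': "(\<Prod>i<n. (- (XX^(2*i+1))) * (1 - XX^(2*(n - Suc i)+1))) = (-1)^n * XX^(n^2) * Oq n"
  proof -
    have "(\<Prod>i<n. (- (XX^(2*i+1)))) = (-1)^n * XX^(n^2)"
    proof -
      have p: "(\<Prod>i<n. XX^(2*i+1)) = XX^(n^2)" by (simp only: power_sum[symmetric] sum_odd)
      show ?thesis by (simp only: prod_uminus p card_lessThan)
    qed
    moreover have "(\<Prod>i<n. (1 - XX^(2*(n - Suc i)+1))) = Oq n"
      unfolding Oq_def by (rule prod.nat_diff_reindex)
    ultimately show ?thesis by (simp only: prod.distrib)
  qed
  have r2: "(\<Prod>i<n. XX^(2*n) - XX*(XX^2)^(n+i)) = XX^(2*n*n) * Oq n"
  proof -
    have "(\<Prod>i<n. XX^(2*n) - XX*(XX^2)^(n+i)) = (\<Prod>i<n. XX^(2*n) * (1 - XX^(2*i+1)))"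
    proof (intro prod.cong refl)
      fix i
      have "XX*(XX^2)^(n+i) = XX^(2*n) * XX^(2*i+1)"
        by (simp add: power_mult[symmetric] power_add[symmetric] algebra_simps)
      thus "XX^(2*n) - XX*(XX^2)^(n+i) = XX^(2*n) * (1 - XX^(2*i+1))" by (simp add: algebra_simps)
    qed
    also have "\<dots> = XX^(2*n*n) * Oq n"
      by (simp add: prod.distrib Oq_def power_mult[symmetric] mult.commute)
    finally show ?thesis .
  qed
  have r: "(\<Prod>i<2*n. XX^(2*n) - XX*(XX^2)^i) = XX^(3*n^2) * ((-1)^n * Oq n * Oq n)"
  proof -
    have "(\<Prod>i<2*n. XX^(2*n) - XX*(XX^2)^i) = (\<Prod>i<n. XX^(2*n) - XX*(XX^2)^i) * (\<Prod>i<n. XX^(2*n) - XX*(XX^2)^(n+i))"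
      using prod_lessThan_add[of "\<lambda>i. XX^(2*n) - XX*(XX^2)^i" n n] by (simp add: mult_2)
    also have "\<dots> = ((-1)^n * XX^(n^2) * Oq n) * (XX^(2*n*n) * Oq n)" using r1 r1' r2 by simp
    also have "\<dots> = XX^(n^2 + 2*n*n) * ((-1)^n * Oq n * Oq n)" by (simp add: power_add mult_ac)
    also have "n^2 + 2*n*n = 3*n^2" by (simp add: power2_eq_square)
    finally show ?thesis .
  qed
  have "XX^(3*n^2) * (\<Sum>k\<le>2*n. (-1)^k * XX^(dd k n ^ 2) * gb (XX^2) (2*n) k) = XX^(3*n^2) * ((-1)^n * Oq n * Oq n)"
    using c l r by simp
  moreover have "XX^(3*n^2) \<noteq> 0" by simp
  ultimately show ?thesis by simp
qed


definition L :: "complex \<Rightarrow> nat \<Rightarrow> complex fps" where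
  "L y s = Abs_fps (\<lambda>n. if n = 0 then 1 else if s dvd n then 2 * y^(n div s) else 0)"

lemma L_eq:
  assumes s: "0 < s"
  shows "L y s * (1 - fps_const y * XX^s) = 1 + fps_const y * XX^s"
proof -
  have "L y s * (1 - fps_const y * XX^s) = L y s - fps_const y * (XX^s * L y s)"
    by (simp add: algebra_simps)
  also have "\<dots> = 1 + fps_const y * XX^s"
  proof (rule fps_ext)
    fix n
    show "(L y s - fps_const y * (XX^s * L y s)) $ n = (1 + fps_const y * XX^s) $ n"
    proof (cases "n < s")
      case True
      then show ?thesis using s by (auto simp: L_def fps_X_power_mult_nth fps_X_power_nth dest: dvd_imp_le)
    next
      case False
      show ?thesis
      proof (cases "n = s")
        case True
        then show ?thesis using s by (simp add: L_def fps_X_power_mult_nth fps_X_power_nth)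
      next
        case ns: False
        with False have ns': "s < n" by simp
        have d: "s dvd n - s \<longleftrightarrow> s dvd n"
        proof
          assume "s dvd n - s"
          hence "s dvd (n - s) + s" by simp
          thus "s dvd n" using ns' by simp
        next
          assume "s dvd n" thus "s dvd n - s" by (simp add: dvd_diff_nat)
        qed
        have "s dvd (n - s) \<Longrightarrow> n div s = Suc ((n - s) div s)"
        proof -
          assume "s dvd (n - s)"
          then obtain q where q: "n - s = s * q" by blast
          hence "n = s * Suc q" using ns' by simp
          thus ?thesis using q s by simp
        qed
        then have "s dvd n \<Longrightarrow> y * y ^ ((n - s) div s) = y ^ (n div s)"
          using d by simp
        then show ?thesis using ns ns' s d
          by (auto simp: L_def fps_X_power_mult_nth fps_X_power_nth)
      qed
    qed
  qed
  finally show ?thesis .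
qed

lemma L_minus: "0 < s \<Longrightarrow> L (-1) s * (1 + XX^s) = 1 - XX^s"
  using L_eq[of s "-1"] by (simp add: fps_const_neg[symmetric])

definition Dm :: "nat \<Rightarrow> complex fps" where "Dm M = (\<Prod>s\<in>{1..M}. L (-1) s)"
definition Am :: "nat \<Rightarrow> complex fps" where "Am M = (\<Prod>s\<in>{1..M}. 1 - XX^s)"

lemma Am_Suc: "Am (Suc M) = Am M * (1 - XX^Suc M)"
  by (simp add: Am_def)

lemma Dm_qp: "Dm M * qp (XX^2) M = Am M * Am M"
proof -
  have "Dm M * qp (XX^2) M = (\<Prod>s\<in>{1..M}. L (-1) s * (1 - (XX^2)^s))"
    by (simp add: Dm_def qp_def prod.distrib)
  also have "\<dots> = (\<Prod>s\<in>{1..M}. (1 - XX^s) * (1 - XX^s))"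
  proof (intro prod.cong refl)
    fix s assume "s \<in> {1..M}"
    hence "0 < s" by simp
    have "(XX^2)^s = XX^s * XX^s" by (simp add: power_mult[symmetric] mult_2 power_add)
    hence "(1 - (XX^2)^s) = (1 + XX^s) * (1 - XX^s)" by (simp add: algebra_simps)
    hence "L (-1) s * (1 - (XX^2)^s) = (L (-1) s * (1 + XX^s)) * (1 - XX^s)" by (simp add: mult.assoc)
    thus "L (-1) s * (1 - (XX^2)^s) = (1 - XX^s) * (1 - XX^s)"
      using L_minus[OF \<open>0 < s\<close>] by simp
  qed
  also have "\<dots> = Am M * Am M" by (simp add: Am_def prod.distrib)
  finally show ?thesis .
qed

lemma Am_double: "Am (2*n) = Oq n * qp (XX^2) n"
proof (induction n)
  case 0
  then show ?case by (simp add: Am_def Oq_def qp_def)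
next
  case (Suc n)
  have p1: "(XX^2)^(Suc n) = XX^(2*n+2)" by (simp only: power_mult[symmetric] mult_Suc_right add.commute[of 2])
  have "Am (2 * Suc n) = Am (2*n) * (1 - XX^(2*n+1)) * (1 - XX^(2*n+2))"
    by (simp add: Am_Suc)
  also have "\<dots> = (Oq n * (1 - XX^(2*n+1))) * (qp (XX^2) n * (1 - (XX^2)^(Suc n)))"
    unfolding Suc.IH p1 by (simp only: mult_ac)
  also have "\<dots> = Oq (Suc n) * qp (XX^2) (Suc n)"
    by (simp add: Oq_def qp_Suc)
  finally show ?case .
qed

lemma Am_eqm: "a \<le> b \<Longrightarrow> m \<le> Suc a \<Longrightarrow> eqm m (Am b) (Am a)"
proof (induction b)
  case 0
  then show ?case by simp
next
  case (Suc b)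
  show ?case
  proof (cases "a = Suc b")
    case False
    with Suc.prems have "a \<le> b" by simp
    with Suc have "eqm m (Am b) (Am a)" by simp
    moreover have "eqm m (1 - XX^Suc b) 1" using Suc.prems \<open>a \<le> b\<close> by (intro eqm_one_minus) simp
    ultimately have "eqm m (Am b * (1 - XX^Suc b)) (Am a * 1)" by (rule eqm_mult)
    thus ?thesis by (simp add: Am_Suc)
  qed simp
qed

lemma qp_eqm: "K \<le> a \<Longrightarrow> m \<le> 2*K+2 \<Longrightarrow> eqm m (qp (XX^2) a) (qp (XX^2) K)"
proof (induction a)
  case 0
  then show ?case by simp
next
  case (Suc a)
  show ?case
  proof (cases "K = Suc a")
    case False
    with Suc.prems have "K \<le> a" by simp
    with Suc have "eqm m (qp (XX^2) a) (qp (XX^2) K)" by simp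
    moreover have "eqm m (1 - XX^(2*Suc a)) 1" using Suc.prems \<open>K \<le> a\<close> by (intro eqm_one_minus) simp
    ultimately have "eqm m (qp (XX^2) a * (1 - XX^(2*Suc a))) (qp (XX^2) K * 1)" by (rule eqm_mult)
    thus ?thesis by (simp only: qp_Suc power_mult mult_1_right)
  qed simp
qed

lemma qp_0: "qp (XX^2) n $ 0 = 1"
  by (induction n) (simp_all add: qp_Suc qp_def[of _ 0])

lemma gb_approx:
  assumes "K \<le> k" "k \<le> N" "K \<le> N - k" "m \<le> 2*K+2"
  shows "eqm m (gb (XX^2) N k * qp (XX^2) K) 1"
proof -
  have p: "gb (XX^2) N k * qp (XX^2) k * qp (XX^2) (N-k) = qp (XX^2) N" using gb_prod assms by blast
  have "eqm m (gb (XX^2) N k * qp (XX^2) k * qp (XX^2) (N-k)) (gb (XX^2) N k * qp (XX^2) K * qp (XX^2) K)"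
    using assms by (intro eqm_mult qp_eqm eqm_refl) auto
  moreover have "eqm m (qp (XX^2) N) (1 * qp (XX^2) K)" using assms by (simp add: qp_eqm)
  ultimately have "eqm m ((gb (XX^2) N k * qp (XX^2) K) * qp (XX^2) K) (1 * qp (XX^2) K)"
    using p by (simp add: eqm_def)
  thus ?thesis by (rule eqm_cancel[rotated]) (simp add: qp_0)
qed

definition th :: "nat \<Rightarrow> complex fps" where
  "th n = (\<Sum>k\<le>2*n. (-1)^k * XX^(dd k n ^ 2))"

lemma theta_approx:
  assumes m: "0 < m"
  shows "eqm m (th (2*m)) (Oq (2*m) * Oq (2*m) * qp (XX^2) m)"
proof -
  define n where "n = 2*m"
  have ft: "(\<Sum>k\<le>2*n. (-1)^k * XX^(dd k n ^ 2) * gb (XX^2) (2*n) k) * qp (XX^2) m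
        = Oq n * Oq n * qp (XX^2) m"
    using finite_theta[of n] by (simp add: n_def)
  have "eqm m (\<Sum>k\<le>2*n. (-1)^k * XX^(dd k n ^ 2)) (\<Sum>k\<le>2*n. (-1)^k * XX^(dd k n ^ 2) * gb (XX^2) (2*n) k * qp (XX^2) m)"
  proof (intro eqm_sum)
    fix k assume k: "k \<in> {..2*n}"
    show "eqm m ((-1)^k * XX^(dd k n ^ 2)) ((-1)^k * XX^(dd k n ^ 2) * gb (XX^2) (2*n) k * qp (XX^2) m)"
    proof (cases "m \<le> dd k n ^ 2")
      case True
      have "eqm m (XX^(dd k n ^ 2) * (-1)^k) 0" using True by (rule eqm_Xpow)
      moreover have "eqm m (XX^(dd k n ^ 2) * ((-1)^k * gb (XX^2) (2*n) k * qp (XX^2) m)) 0"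
        using True by (rule eqm_Xpow)
      ultimately have h: "eqm m (XX^(dd k n ^ 2) * (-1)^k) (XX^(dd k n ^ 2) * ((-1)^k * gb (XX^2) (2*n) k * qp (XX^2) m))"
        by (auto simp: eqm_def)
      have e1: "(-1)^k * XX^(dd k n ^ 2) = XX^(dd k n ^ 2) * (-1)^k" by (simp add: mult_ac)
      have e2: "(-1)^k * XX^(dd k n ^ 2) * gb (XX^2) (2*n) k * qp (XX^2) m
           = XX^(dd k n ^ 2) * ((-1)^k * gb (XX^2) (2*n) k * qp (XX^2) m)" by (simp add: mult_ac)
      show ?thesis by (subst e2, subst e1, rule h)
    next
      case False
      have "dd k n \<le> dd k n ^ 2" by (simp add: power2_eq_square)
      with False have "dd k n < m" by simp
      hence "m \<le> k" "k \<le> 2*n" "m \<le> 2*n - k" using k by (auto simp: dd_def n_def split: if_splits)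
      hence "eqm m (gb (XX^2) (2*n) k * qp (XX^2) m) 1" by (intro gb_approx) auto
      hence "eqm m ((-1)^k * XX^(dd k n ^ 2) * (gb (XX^2) (2*n) k * qp (XX^2) m)) ((-1)^k * XX^(dd k n ^ 2) * 1)"
        by (intro eqm_mult eqm_refl)
      thus ?thesis by (simp add: mult.assoc eqm_sym)
    qed
  qed
  hence "eqm m (th n) (Oq n * Oq n * qp (XX^2) m)"
    using ft by (simp add: th_def sum_distrib_right)
  thus ?thesis by (simp add: n_def)
qed

lemma D_theta:
  assumes m: "0 < m" "m \<le> Suc M"
  shows "eqm m (Dm M) (th (2*m))"
proof -
  define n where "n = 2*m"
  define S where "S = qp (XX^2) (m-1)"
  have mk: "m \<le> 2*(m-1)+2" by simp
  have e1: "eqm m (qp (XX^2) M) S" unfolding S_def using m by (intro qp_eqm) auto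
  have e2: "eqm m (qp (XX^2) m) S" unfolding S_def using m by (intro qp_eqm) auto
  have e3: "eqm m (qp (XX^2) n) S" unfolding S_def using m by (intro qp_eqm) (auto simp: n_def)
  have a1: "eqm m (Am M) (Am (m-1))" using m by (intro Am_eqm) auto
  have a2: "eqm m (Am (2*n)) (Am (m-1))" using m by (intro Am_eqm) (auto simp: n_def)
  have AA: "eqm m (Am M) (Oq n * S)"
  proof -
    have "eqm m (Am M) (Am (2*n))" using a1 a2 by (simp add: eqm_def)
    moreover have "eqm m (Am (2*n)) (Oq n * S)" using eqm_mult[OF eqm_refl e3] by (simp add: Am_double)
    ultimately show ?thesis by (auto simp: eqm_def)
  qed
  have "eqm m (Am M * Am M) ((Oq n * S) * (Oq n * S))" by (rule eqm_mult[OF AA AA])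
  hence "eqm m (Dm M * qp (XX^2) M) ((Oq n * S) * (Oq n * S))" by (simp add: Dm_qp)
  moreover have "eqm m (Dm M * S) (Dm M * qp (XX^2) M)" by (intro eqm_mult eqm_refl eqm_sym[OF e1])
  ultimately have "eqm m (Dm M * S) ((Oq n * S) * (Oq n * S))" by (rule eqm_trans[rotated])
  moreover have "(Oq n * S) * (Oq n * S) = (Oq n * Oq n * S) * S" by (simp add: mult_ac)
  ultimately have "eqm m (Dm M * S) ((Oq n * Oq n * S) * S)" by simp
  hence d: "eqm m (Dm M) (Oq n * Oq n * S)" by (rule eqm_cancel[rotated]) (simp add: S_def qp_0)
  have "eqm m (th n) (Oq n * Oq n * qp (XX^2) m)" using theta_approx[OF m(1)] by (simp add: n_def)
  moreover have "eqm m (Oq n * Oq n * qp (XX^2) m) (Oq n * Oq n * S)" by (intro eqm_mult eqm_refl e2)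
  ultimately have "eqm m (th n) (Oq n * Oq n * S)" by (rule eqm_trans)
  with d show ?thesis unfolding n_def by (simp add: eqm_def)
qed

lemma D_coeff:
  assumes "j \<le> M" "\<forall>a. j \<noteq> a^2"
  shows "Dm M $ j = 0"
proof -
  have "eqm (Suc j) (Dm M) (th (2*Suc j))" using assms by (intro D_theta) auto
  hence "Dm M $ j = th (2*Suc j) $ j" by (simp add: eqm_def)
  also have "\<dots> = 0" unfolding th_def fps_sum_nth
  proof (intro sum.neutral ballI)
    fix k
    have "((-1::complex fps)^k * XX^(dd k n ^ 2)) $ j = (-1)^k * (XX^(dd k n ^ 2)) $ j" for n
      by (cases "even k") simp_all
    thus "((-1::complex fps)^k * XX^(dd k (2*Suc j) ^ 2)) $ j = 0"
      using assms(2) by (simp add: fps_X_power_nth)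
  qed
  finally show ?thesis .
qed


definition RU :: "nat \<Rightarrow> complex set" where "RU t = {w. w^t = 1}"

lemma RU_finite: "0 < t \<Longrightarrow> finite (RU t)"
  unfolding RU_def by (rule finite_roots_unity) simp

lemma RU_card: "0 < t \<Longrightarrow> card (RU t) = t"
  unfolding RU_def by (rule card_roots_unity_eq)

lemma RU_1: "1 \<in> RU t" by (simp add: RU_def)

lemma poly_id:
  assumes t: "0 < t"
  shows "(\<Prod>w\<in>RU t. [:1, -w:]) = 1 - monom 1 t"
proof (rule poly_eqI_degree[of "insert 0 (RU t)"])
  have fin: "finite (RU t)" using RU_finite t .
  have z: "0 \<notin> RU t" using t by (simp add: RU_def zero_power)
  show "card (insert 0 (RU t)) > degree (\<Prod>w\<in>RU t. [:1, -w:])"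
  proof -
    have "degree (\<Prod>w\<in>RU t. [:1, -w:]) \<le> (\<Sum>w\<in>RU t. degree [:1, -w:])"
      using degree_prod_sum_le[OF fin, of "\<lambda>w. [:1,-w:]"] unfolding o_def .
    also have "\<dots> \<le> (\<Sum>w\<in>RU t. 1)" by (intro sum_mono) simp
    also have "\<dots> = t" using RU_card[OF t] by simp
    finally show ?thesis using fin z RU_card[OF t] by simp
  qed
  show "card (insert 0 (RU t)) > degree (1 - monom 1 t :: complex poly)"
  proof -
    have "degree (1 - monom 1 t :: complex poly) \<le> t"
      by (intro degree_diff_le) (auto simp: degree_monom_le)
    thus ?thesis using fin z RU_card[OF t] by simp
  qed
  fix x assume x: "x \<in> insert 0 (RU t)"
  show "poly (\<Prod>w\<in>RU t. [:1, -w:]) x = poly (1 - monom 1 t) x"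
  proof (cases "x = 0")
    case True
    then show ?thesis using t by (simp add: poly_prod poly_monom)
  next
    case False
    with x have xr: "x^t = 1" by (simp add: RU_def)
    have ir: "inverse x \<in> RU t" using xr by (simp add: RU_def power_inverse)
    have "poly (\<Prod>w\<in>RU t. [:1, -w:]) x = (\<Prod>w\<in>RU t. 1 - w * x)" by (simp add: poly_prod mult.commute)
    also have "\<dots> = 0"
      using fin ir False by (auto simp: prod_zero_iff intro!: bexI[of _ "inverse x"])
    finally show ?thesis using xr by (simp add: poly_monom)
  qed
qed

lemma fps_prod_id:
  fixes y :: "complex fps"
  assumes t: "0 < t" and y: "y $ 0 = 0"
  shows "(\<Prod>w\<in>RU t. 1 - fps_const w * y) = 1 - y^t"
proof -
  have "fps_of_poly (\<Prod>w\<in>RU t. [:1, -w:]) oo y = fps_of_poly (1 - monom 1 t) oo y"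
    by (simp only: poly_id[OF t])
  moreover have "fps_of_poly (\<Prod>w\<in>RU t. [:1, -w:]) oo y = (\<Prod>w\<in>RU t. 1 - fps_const w * y)"
  proof -
    have "fps_of_poly (\<Prod>w\<in>RU t. [:1, -w:]) oo y = (\<Prod>w\<in>RU t. fps_of_poly [:1, -w:] oo y)"
      by (simp only: fps_of_poly_prod fps_compose_prod_distrib[OF y])
    also have "\<dots> = (\<Prod>w\<in>RU t. 1 - fps_const w * y)"
    proof (intro prod.cong refl)
      fix w :: complex
      have "fps_of_poly [:1, -w:] = fps_const 1 + fps_const (-w) * fps_X"
        by (simp only: fps_of_poly_pCons fps_of_poly_0 mult_zero_left add_0_right)
      hence "fps_of_poly [:1, -w:] = 1 - fps_const w * fps_X"
        by (simp add: fps_const_neg[symmetric] del: fps_const_neg)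
      hence "fps_of_poly [:1, -w:] oo y = (1 oo y) - (fps_const w * fps_X oo y)"
        by (simp add: fps_compose_sub_distrib)
      also have "\<dots> = 1 - fps_const w * y"
        using y by (simp add: fps_const_mult_apply_left[symmetric])
      finally show "fps_of_poly [:1, -w:] oo y = 1 - fps_const w * y" .
    qed
    finally show ?thesis .
  qed
  moreover have "fps_of_poly (1 - monom 1 t) oo y = 1 - y^t"
  proof -
    have "fps_of_poly (1 - monom 1 t) oo y = (1 oo y) - (fps_X^t oo y)"
      by (simp add: fps_of_poly_diff fps_of_poly_monom' fps_compose_sub_distrib)
    also have "\<dots> = 1 - y^t"
      using y by (simp add: fps_compose_power[OF y, symmetric])
    finally show ?thesis .
  qed
  ultimately show ?thesis by simp
qed

lemma L_prod:
  assumes t: "1 < t" "odd t" and s0: "0 < s"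
  shows "(\<Prod>w\<in>RU t - {1}. L w s) = L 1 (t*s) * L (-1) s"
proof -
  have t0: "0 < t" using t by simp
  have fin: "finite (RU t)" using RU_finite t0 .
  define u where "u w = 1 - fps_const w * XX^s" for w
  define v where "v w = 1 + fps_const w * XX^s" for w
  have Lu: "L w s * u w = v w" for w unfolding u_def v_def by (rule L_eq[OF s0])
  have U: "(\<Prod>w\<in>RU t. u w) = 1 -(XX^(t*s))"
    unfolding u_def using fps_prod_id[OF t0, of "XX^s"] s0 by (simp add: power_mult mult.commute)
  have V: "(\<Prod>w\<in>RU t. v w) = 1 + XX^(t*s)"
  proof -
    have "(\<Prod>w\<in>RU t. 1 - fps_const w * (-(XX^s))) = 1 - (-(XX^s))^t"
      using fps_prod_id[OF t0, of "-(XX^s)"] s0 by simp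
    moreover have "(-(XX^s))^t = -(XX^(t*s))" using t(2) by (simp add: power_mult mult.commute)
    ultimately show ?thesis unfolding v_def by simp
  qed
  have split: "(\<Prod>w\<in>RU t. f w) = (\<Prod>w\<in>RU t - {1}. f w) * f 1" for f :: "complex \<Rightarrow> complex fps"
    using prod.remove[OF fin RU_1, of f] by (simp add: mult.commute)
  have l: "(\<Prod>w\<in>RU t - {1}. L w s) * ((\<Prod>w\<in>RU t. u w) * v 1) = (\<Prod>w\<in>RU t. v w) * u 1"
  proof -
    have "(\<Prod>w\<in>RU t - {1}. L w s) * ((\<Prod>w\<in>RU t. u w) * v 1)
        = (\<Prod>w\<in>RU t - {1}. L w s * u w) * (u 1 * v 1)"
      by (simp add: split[of u] prod.distrib mult_ac)
    also have "\<dots> = (\<Prod>w\<in>RU t - {1}. v w) * (u 1 * v 1)" by (simp add: Lu)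
    also have "\<dots> = (\<Prod>w\<in>RU t. v w) * u 1" by (simp add: split[of v] mult_ac)
    finally show ?thesis .
  qed
  have r: "(L 1 (t*s) * L (-1) s) * ((\<Prod>w\<in>RU t. u w) * v 1) = (\<Prod>w\<in>RU t. v w) * u 1"
  proof -
    have a: "L 1 (t*s) * (1 -(XX^(t*s))) = 1 + XX^(t*s)" using L_eq[of "t*s" 1] s0 t0 by simp
    have b: "L (-1) s * v 1 = u 1" unfolding u_def v_def using L_minus[OF s0] by simp
    have "(L 1 (t*s) * L (-1) s) * ((\<Prod>w\<in>RU t. u w) * v 1)
        = (L 1 (t*s) * (1 -(XX^(t*s)))) * (L (-1) s * v 1)" by (simp add: U mult_ac)
    also have "\<dots> = (\<Prod>w\<in>RU t. v w) * u 1" using a b V by simp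
    finally show ?thesis .
  qed
  have nz: "(\<Prod>w\<in>RU t. u w) * v 1 \<noteq> 0"
  proof -
    have "((\<Prod>w\<in>RU t. u w) * v 1) $ 0 = 1" using t0 s0 by (simp add: U v_def)
    thus ?thesis by auto
  qed
  have "(\<Prod>w\<in>RU t - {1}. L w s) * ((\<Prod>w\<in>RU t. u w) * v 1) = (L 1 (t*s) * L (-1) s) * ((\<Prod>w\<in>RU t. u w) * v 1)"
    using l r by simp
  thus ?thesis using nz by simp
qed


definition GG :: "'i set \<Rightarrow> ('i \<Rightarrow> 'v \<Rightarrow> nat) \<Rightarrow> 'v set \<Rightarrow> nat \<Rightarrow> ('i \<Rightarrow> 'v) set" where
  "GG I sz V m = {g. g \<in> I \<rightarrow>\<^sub>E V \<and> (\<Sum>i\<in>I. sz i (g i)) = m}"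

definition FF :: "('v \<Rightarrow> nat) \<Rightarrow> ('v \<Rightarrow> complex) \<Rightarrow> 'v set \<Rightarrow> complex fps" where
  "FF sz wt V = Abs_fps (\<lambda>n. \<Sum>v\<in>{v\<in>V. sz v = n}. wt v)"

lemma GG_finite:
  assumes "finite I" "\<And>i n. i \<in> I \<Longrightarrow> finite {v\<in>V. sz i v = n}"
  shows "finite (GG I sz V m)"
proof -
  have f: "finite {v\<in>V. sz i v \<le> m}" if "i \<in> I" for i
  proof -
    have "{v\<in>V. sz i v \<le> m} = (\<Union>k\<le>m. {v\<in>V. sz i v = k})" by auto
    thus ?thesis using assms(2)[OF that] by simp
  qed
  have "GG I sz V m \<subseteq> PiE I (\<lambda>i. {v\<in>V. sz i v \<le> m})"
  proof
    fix g assume g: "g \<in> GG I sz V m"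
    hence gi: "g \<in> I \<rightarrow>\<^sub>E V" and s: "(\<Sum>i\<in>I. sz i (g i)) = m" by (auto simp: GG_def)
    have "sz i (g i) \<le> m" if "i \<in> I" for i
      using member_le_sum[of i I "\<lambda>i. sz i (g i)"] that assms(1) s by simp
    thus "g \<in> PiE I (\<lambda>i. {v\<in>V. sz i v \<le> m})" using gi by (auto simp: PiE_def Pi_def)
  qed
  moreover have "finite (PiE I (\<lambda>i. {v\<in>V. sz i v \<le> m}))"
    using assms(1) f by (intro finite_PiE) auto
  ultimately show ?thesis by (rule finite_subset)
qed

lemma gf_prod:
  assumes "finite I" "\<And>i n. i \<in> I \<Longrightarrow> finite {v\<in>V. sz i v = n}"
  shows "(\<Prod>i\<in>I. FF (sz i) (wt i) V) $ n = (\<Sum>g\<in>GG I sz V n. \<Prod>i\<in>I. wt i (g i))"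
  using assms
proof (induction I arbitrary: n rule: finite_induct)
  case empty
  have "GG {} sz V n = (if n = 0 then {\<lambda>_. undefined} else {})" by (auto simp: GG_def)
  then show ?case by simp
next
  case (insert a I)
  have finI: "\<And>m. finite (GG I sz V m)" using insert by (intro GG_finite) auto
  have fa: "\<And>j. finite {v\<in>V. sz a v = j}" using insert by auto
  define T where "T = (SIGMA j:{0..n}. {v\<in>V. sz a v = j} \<times> GG I sz V (n - j))"
  have "(\<Prod>i\<in>insert a I. FF (sz i) (wt i) V) $ n = (FF (sz a) (wt a) V * (\<Prod>i\<in>I. FF (sz i) (wt i) V)) $ n"
    using insert by simp
  also have "\<dots> = (\<Sum>j=0..n. (\<Sum>v\<in>{v\<in>V. sz a v = j}. wt a v) * (\<Sum>g\<in>GG I sz V (n-j). \<Prod>i\<in>I. wt i (g i)))"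
    using insert by (simp add: fps_mult_nth FF_def)
  also have "\<dots> = (\<Sum>j=0..n. \<Sum>(v,g)\<in>{v\<in>V. sz a v = j} \<times> GG I sz V (n-j). wt a v * (\<Prod>i\<in>I. wt i (g i)))"
    by (simp add: sum_product sum.cartesian_product)
  also have "\<dots> = (\<Sum>(j,(v,g))\<in>T. wt a v * (\<Prod>i\<in>I. wt i (g i)))"
    unfolding T_def by (subst sum.Sigma) (auto simp: fa finI)
  also have "\<dots> = (\<Sum>g\<in>GG (insert a I) sz V n. \<Prod>i\<in>insert a I. wt i (g i))"
  proof (rule sym, rule sum.reindex_bij_witness[where i = "\<lambda>(j,(v,g)). g(a := v)" and j = "\<lambda>g. (sz a (g a), (g a, restrict g I))"])
    fix g assume g: "g \<in> GG (insert a I) sz V n"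
    hence gp: "g \<in> insert a I \<rightarrow>\<^sub>E V" and gs: "sz a (g a) + (\<Sum>i\<in>I. sz i (g i)) = n"
      using insert by (auto simp: GG_def)
    show "(\<lambda>(j,(v,g)). g(a := v)) (sz a (g a), (g a, restrict g I)) = g"
      using gp by (auto simp: fun_eq_iff PiE_def extensional_def)
    have rs: "(\<Sum>i\<in>I. sz i (restrict g I i)) = (\<Sum>i\<in>I. sz i (g i))" by (intro sum.cong) auto
    show "(sz a (g a), (g a, restrict g I)) \<in> T"
      using gp gs rs by (auto simp: T_def GG_def PiE_def Pi_def)
    show "(\<lambda>(j,(v,g)). wt a v * (\<Prod>i\<in>I. wt i (g i))) (sz a (g a), (g a, restrict g I)) = (\<Prod>i\<in>insert a I. wt i (g i))"
      using insert by simp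
  next
    fix b assume b: "b \<in> T"
    then obtain j v h where bj: "b = (j,(v,h))" and j: "j \<le> n" and v: "v \<in> V" "sz a v = j"
      and h: "h \<in> I \<rightarrow>\<^sub>E V" "(\<Sum>i\<in>I. sz i (h i)) = n - j"
      by (auto simp: T_def GG_def)
    have ha: "h a = undefined" using h(1) insert(2) by (auto simp: PiE_def extensional_def)
    have rr: "restrict (h(a := v)) I = h" using h(1) insert(2) by (auto simp: fun_eq_iff PiE_def extensional_def)
    show "(\<lambda>g. (sz a (g a), (g a, restrict g I))) ((\<lambda>(j,(v,g)). g(a := v)) b) = b"
      using bj v rr by simp
    have hs: "(\<Sum>i\<in>I. sz i ((h(a := v)) i)) = (\<Sum>i\<in>I. sz i (h i))"
      using insert(2) by (intro sum.cong) auto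
    show "(\<lambda>(j,(v,g)). g(a := v)) b \<in> GG (insert a I) sz V n"
      using bj v h j hs insert(1,2) by (auto simp: GG_def PiE_def Pi_def extensional_def)
  qed
  finally show ?case .
qed


lemma mset_decomp:
  assumes "finite A" "set_mset M \<subseteq> A"
  shows "M = (\<Sum>s\<in>A. replicate_mset (count M s) s)"
proof (rule multiset_eqI)
  fix x
  have "count (\<Sum>s\<in>A. replicate_mset (count M s) s) x = (\<Sum>s\<in>A. if x = s then count M s else 0)"
    by (simp add: count_sum count_replicate_mset)
  also have "\<dots> = (if x \<in> A then count M x else 0)" using assms(1) by (simp add: sum.delta')
  also have "\<dots> = count M x" using assms(2) by (auto simp: not_in_iff)
  finally show "count M x = count (\<Sum>s\<in>A. replicate_mset (count M s) s) x" by simp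
qed

lemma sum_mset_sum_gen: "sum_mset (\<Sum>s\<in>A. f s) = (\<Sum>s\<in>A. sum_mset (f s))"
  by (induction A rule: infinite_finite_induct) auto

lemma sum_mset_count:
  assumes "finite A" "set_mset M \<subseteq> A"
  shows "sum_mset M = (\<Sum>s\<in>A. count M s * s)"
proof -
  have "sum_mset M = sum_mset (\<Sum>s\<in>A. replicate_mset (count M s) s)" using mset_decomp[OF assms] by simp
  also have "\<dots> = (\<Sum>s\<in>A. count M s * s)" by (simp add: sum_mset_sum_gen)
  finally show ?thesis .
qed

lemma size_count:
  assumes "finite A" "set_mset M \<subseteq> A"
  shows "size M = (\<Sum>s\<in>A. count M s)"
proof -
  have "size M = size (\<Sum>s\<in>A. replicate_mset (count M s) s)" using mset_decomp[OF assms] by simp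
  also have "\<dots> = (\<Sum>s\<in>A. count M s)" by simp
  finally show ?thesis .
qed

lemma count_replicate_sum:
  assumes "finite A" "x \<in> A"
  shows "count (\<Sum>s\<in>A. replicate_mset (f s) s) x = f x"
  using assms by (simp add: count_sum count_replicate_mset sum.delta)

lemma set_replicate_sum:
  assumes "finite A"
  shows "set_mset (\<Sum>s\<in>A. replicate_mset (f s) s) = {s\<in>A. 0 < f s}"
proof -
  have "x \<in># (\<Sum>s\<in>A. replicate_mset (f s) s) \<longleftrightarrow> x \<in> A \<and> 0 < f x" for x
    using assms by (simp add: count_sum count_replicate_mset sum.delta flip: count_greater_zero_iff)
  thus ?thesis by auto
qed

lemma weight_multirank:
  fixes z :: complex
  assumes t: "odd t" "1 < t" and z: "z^t = 1"
  shows "z powi (multirank t F) = (\<Prod>c\<in>{1..t-1}. (z^c)^(op_len (F c)))"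
proof -
  define h where "h = (t-1) div 2"
  have th: "t = 2*h+1" using t by (simp add: h_def)
  have z0: "z \<noteq> 0" using z t by (auto simp: zero_power)
  define len where "len c = op_len (F c)" for c
  have step: "z powi (int k * (int (len k) - int (len (t-k)))) = (z^k)^(len k) * (z^(t-k))^(len (t-k))"
    if "k \<in> {1..h}" for k
  proof -
    from that th have kt: "k \<le> t" by simp
    have "z powi (int k * (int (len k) - int (len (t-k)))) = z powi (int (k * len k)) / z powi (int (k * len (t-k)))"
      using z0 by (simp add: power_int_diff algebra_simps)
    also have "\<dots> = z^(k * len k) / z^(k * len (t-k))" by (simp only: power_int_of_nat)
    also have "z^(k * len (t-k)) * z^((t-k) * len (t-k)) = 1"
    proof -
      have "z^(k * len (t-k)) * z^((t-k) * len (t-k)) = z^(t * len (t-k))"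
        using kt by (simp add: power_add[symmetric] add_mult_distrib[symmetric])
      also have "\<dots> = 1" by (simp add: power_mult z)
      finally show ?thesis .
    qed
    hence "1 / z^(k * len (t-k)) = z^((t-k) * len (t-k))" using z0 by (simp add: field_simps)
    hence "z^(k * len k) / z^(k * len (t-k)) = z^(k * len k) * z^((t-k) * len (t-k))"
      by (metis divide_inverse inverse_eq_divide)
    finally show ?thesis by (simp add: power_mult)
  qed
  have "z powi (multirank t F) = (\<Prod>k\<in>{1..h}. z powi (int k * (int (len k) - int (len (t-k)))))"
    unfolding multirank_def h_def[symmetric] len_def[symmetric]
  proof (induction h)
    case (Suc h)
    then show ?case using z0 by (simp add: power_int_add)
  qed simp
  also have "\<dots> = (\<Prod>k\<in>{1..h}. (z^k)^(len k)) * (\<Prod>k\<in>{1..h}. (z^(t-k))^(len (t-k)))"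
    by (simp add: step prod.distrib)
  also have "(\<Prod>k\<in>{1..h}. (z^(t-k))^(len (t-k))) = (\<Prod>c\<in>{h+1..t-1}. (z^c)^(len c))"
  proof -
    have inj: "inj_on (\<lambda>k. t - k) {1..h}" using th by (auto simp: inj_on_def)
    have im: "(\<lambda>k. t - k) ` {1..h} = {h+1..t-1}"
    proof
      show "(\<lambda>k. t - k) ` {1..h} \<subseteq> {h+1..t-1}" using th by auto
      show "{h+1..t-1} \<subseteq> (\<lambda>k. t - k) ` {1..h}"
      proof
        fix c assume "c \<in> {h+1..t-1}"
        hence "c = t - (t - c)" "t - c \<in> {1..h}" using th by auto
        thus "c \<in> (\<lambda>k. t - k) ` {1..h}" by blast
      qed
    qed
    show ?thesis using prod.reindex[OF inj, of "\<lambda>c. (z^c)^(len c)"] im by simp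
  qed
  also have "(\<Prod>k\<in>{1..h}. (z^k)^(len k)) * (\<Prod>c\<in>{h+1..t-1}. (z^c)^(len c)) = (\<Prod>c\<in>{1..t-1}. (z^c)^(len c))"
  proof -
    have "{1..t-1} = {1..h} \<union> {h+1..t-1}" using th by auto
    thus ?thesis by (simp add: prod.union_disjoint[symmetric] ivl_disj_int_two)
  qed
  finally show ?thesis by (simp add: len_def)
qed


subsection \<open>Colored overpartitions as functions on (part, color) pairs\<close>

definition II :: "nat \<Rightarrow> nat \<Rightarrow> (nat \<times> nat) set" where "II t n = {1..n} \<times> {1..t-1}"
definition VV :: "(nat \<times> bool) set" where "VV = {(m, b). b \<longrightarrow> 0 < m}"
definition szz :: "nat \<times> nat \<Rightarrow> nat \<times> bool \<Rightarrow> nat" where "szz i v = fst i * fst v"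
definition wtt :: "complex \<Rightarrow> nat \<times> nat \<Rightarrow> nat \<times> bool \<Rightarrow> complex" where "wtt z i v = (z ^ snd i) ^ fst v"

definition phi :: "nat \<Rightarrow> nat \<Rightarrow> (nat \<Rightarrow> overpartition) \<Rightarrow> nat \<times> nat \<Rightarrow> nat \<times> bool" where
  "phi t n F = restrict (\<lambda>(s,c). (count (fst (F c)) s, s \<in> snd (F c))) (II t n)"

definition psi :: "nat \<Rightarrow> nat \<Rightarrow> (nat \<times> nat \<Rightarrow> nat \<times> bool) \<Rightarrow> nat \<Rightarrow> overpartition" where
  "psi t n g = restrict (\<lambda>c. (\<Sum>s\<in>{1..n}. replicate_mset (fst (g (s,c))) s, {s\<in>{1..n}. snd (g (s,c))})) {1..t-1}"

lemma mem_le_sum_mset: "(x::nat) \<in># M \<Longrightarrow> x \<le> sum_mset M"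
  by (metis le_add1 multi_member_split sum_mset.add_mset)

lemma colored_parts:
  assumes "F \<in> colored_overpartitions t n" "c \<in> {1..t-1}"
  shows "set_mset (fst (F c)) \<subseteq> {1..n}" "snd (F c) \<subseteq> set_mset (fst (F c))"
    "is_overpartition (F c)"
proof -
  have op: "is_overpartition (F c)" using assms by (auto simp: colored_overpartitions_def PiE_def Pi_def)
  thus "is_overpartition (F c)" .
  have "op_size (F c) \<le> (\<Sum>k\<in>{1..t-1}. op_size (F k))"
    using assms(2) by (intro member_le_sum) auto
  hence le: "op_size (F c) \<le> n" using assms(1) by (simp add: colored_overpartitions_def)
  show "set_mset (fst (F c)) \<subseteq> {1..n}"
  proof
    fix x assume x: "x \<in># fst (F c)"
    have "x \<noteq> 0"
    proof
      assume "x = 0" with x op show False by (simp add: is_overpartition_def)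
    qed
    moreover have "x \<le> n" using mem_le_sum_mset[OF x] le by (simp add: op_size_def)
    ultimately show "x \<in> {1..n}" by simp
  qed
  show "snd (F c) \<subseteq> set_mset (fst (F c))" using op by (simp add: is_overpartition_def)
qed

lemma colored_sum:
  assumes t: "odd t" "1 < t" and z: "z^t = 1"
  shows "(\<Sum>F\<in>colored_overpartitions t n. z powi (multirank t F))
       = (\<Sum>g\<in>GG (II t n) szz VV n. \<Prod>i\<in>II t n. wtt z i (g i))"
proof (rule sum.reindex_bij_witness[where j = "phi t n" and i = "psi t n"])
  fix F assume F: "F \<in> colored_overpartitions t n"
  have FE: "F \<in> {1..t-1} \<rightarrow>\<^sub>E Collect is_overpartition" using F by (simp add: colored_overpartitions_def)
  have Fs: "(\<Sum>k\<in>{1..t-1}. op_size (F k)) = n" using F by (simp add: colored_overpartitions_def)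
  show "psi t n (phi t n F) = F"
  proof
    fix c show "psi t n (phi t n F) c = F c"
    proof (cases "c \<in> {1..t-1}")
      case True
      have pf: "phi t n F (s,c) = (count (fst (F c)) s, s \<in> snd (F c))" if "s \<in> {1..n}" for s
        using that True by (simp add: phi_def II_def)
      have a: "(\<Sum>s\<in>{1..n}. replicate_mset (fst (phi t n F (s,c))) s) = fst (F c)"
      proof -
        have "(\<Sum>s\<in>{1..n}. replicate_mset (fst (phi t n F (s,c))) s) = (\<Sum>s\<in>{1..n}. replicate_mset (count (fst (F c)) s) s)"
          by (intro sum.cong refl) (simp add: pf)
        also have "\<dots> = fst (F c)" using mset_decomp[OF _ colored_parts(1)[OF F True]] by simp
        finally show ?thesis .
      qed
      have b: "{s\<in>{1..n}. snd (phi t n F (s,c))} = snd (F c)"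
        using colored_parts(1,2)[OF F True] pf by auto
      show ?thesis using True a b by (simp add: psi_def prod_eq_iff)
    next
      case False
      then show ?thesis using FE by (auto simp: psi_def PiE_def extensional_def)
    qed
  qed
  show "phi t n F \<in> GG (II t n) szz VV n"
  proof -
    have "phi t n F \<in> II t n \<rightarrow>\<^sub>E VV"
    proof -
      have "(count (fst (F c)) s, s \<in> snd (F c)) \<in> VV" if "(s,c) \<in> II t n" for s c
        using colored_parts(2)[of F t n c] F that by (auto simp: VV_def II_def)
      thus ?thesis by (auto simp: phi_def)
    qed
    moreover have "(\<Sum>i\<in>II t n. szz i (phi t n F i)) = n"
    proof -
      have "(\<Sum>i\<in>II t n. szz i (phi t n F i)) = (\<Sum>(s,c)\<in>{1..n} \<times> {1..t-1}. s * count (fst (F c)) s)"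
        unfolding II_def by (intro sum.cong refl) (auto simp: szz_def phi_def II_def)
      also have "\<dots> = (\<Sum>s\<in>{1..n}. \<Sum>c\<in>{1..t-1}. s * count (fst (F c)) s)"
        by (simp add: sum.cartesian_product)
      also have "\<dots> = (\<Sum>c\<in>{1..t-1}. \<Sum>s\<in>{1..n}. count (fst (F c)) s * s)"
        by (subst sum.swap) (simp add: mult.commute)
      also have "\<dots> = (\<Sum>c\<in>{1..t-1}. op_size (F c))"
        using sum_mset_count[OF _ colored_parts(1)[OF F]] by (simp add: op_size_def)
      finally show ?thesis using Fs by simp
    qed
    ultimately show ?thesis by (simp add: GG_def)
  qed
  show "(\<Prod>i\<in>II t n. wtt z i (phi t n F i)) = z powi (multirank t F)"
  proof -
    have "(\<Prod>i\<in>II t n. wtt z i (phi t n F i)) = (\<Prod>(s,c)\<in>{1..n} \<times> {1..t-1}. (z^c)^(count (fst (F c)) s))"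
      unfolding II_def by (intro prod.cong refl) (auto simp: wtt_def phi_def II_def)
    also have "\<dots> = (\<Prod>s\<in>{1..n}. \<Prod>c\<in>{1..t-1}. (z^c)^(count (fst (F c)) s))"
      by (simp add: prod.cartesian_product)
    also have "\<dots> = (\<Prod>c\<in>{1..t-1}. \<Prod>s\<in>{1..n}. (z^c)^(count (fst (F c)) s))"
      by (rule prod.swap)
    also have "\<dots> = (\<Prod>c\<in>{1..t-1}. (z^c)^(op_len (F c)))"
    proof (intro prod.cong refl)
      fix c assume c: "c \<in> {1..t-1}"
      have "(\<Prod>s\<in>{1..n}. (z^c)^(count (fst (F c)) s)) = (z^c)^(\<Sum>s\<in>{1..n}. count (fst (F c)) s)"
        by (simp add: power_sum)
      also have "\<dots> = (z^c)^(op_len (F c))"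
        using size_count[OF _ colored_parts(1)[OF F c]] by (simp add: op_len_def)
      finally show "(\<Prod>s\<in>{1..n}. (z^c)^(count (fst (F c)) s)) = (z^c)^(op_len (F c))" .
    qed
    also have "\<dots> = z powi (multirank t F)" using weight_multirank[OF t z] by simp
    finally show ?thesis .
  qed
next
  fix g assume g: "g \<in> GG (II t n) szz VV n"
  have gE: "g \<in> II t n \<rightarrow>\<^sub>E VV" and gs: "(\<Sum>i\<in>II t n. szz i (g i)) = n" using g by (auto simp: GG_def)
  have gV: "snd (g (s,c)) \<Longrightarrow> 0 < fst (g (s,c))" if "s \<in> {1..n}" "c \<in> {1..t-1}" for s c
  proof -
    have "g (s,c) \<in> VV" using gE that by (auto simp: II_def PiE_def Pi_def)
    thus "snd (g (s,c)) \<Longrightarrow> 0 < fst (g (s,c))" by (cases "g (s,c)") (auto simp: VV_def)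
  qed
  show "phi t n (psi t n g) = g"
  proof
    fix i show "phi t n (psi t n g) i = g i"
    proof (cases "i \<in> II t n")
      case True
      then obtain s c where i: "i = (s,c)" "s \<in> {1..n}" "c \<in> {1..t-1}" by (auto simp: II_def)
      have "count (\<Sum>s'\<in>{1..n}. replicate_mset (fst (g (s',c))) s') s = fst (g (s,c))"
        using i by (intro count_replicate_sum) auto
      thus ?thesis unfolding i(1) using True[unfolded i(1)] i(2,3) by (simp add: phi_def psi_def prod_eq_iff)
    next
      case False
      then show ?thesis using gE by (cases i) (auto simp: phi_def PiE_def extensional_def)
    qed
  qed
  show "psi t n g \<in> colored_overpartitions t n"
  proof -
    have osz: "op_size (psi t n g c) = (\<Sum>s\<in>{1..n}. s * fst (g (s,c)))" if "c \<in> {1..t-1}" for c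
      using that by (simp add: psi_def op_size_def sum_mset_sum_gen mult.commute)
    have isop: "is_overpartition (psi t n g c)" if c: "c \<in> {1..t-1}" for c
    proof -
      have st: "set_mset (fst (psi t n g c)) = {s\<in>{1..n}. 0 < fst (g (s,c))}"
        using c by (simp add: psi_def set_replicate_sum)
      show ?thesis unfolding is_overpartition_def st using c gV by (auto simp: psi_def)
    qed
    have "psi t n g \<in> {1..t-1} \<rightarrow>\<^sub>E Collect is_overpartition"
      using isop by (auto simp: psi_def)
    moreover have "(\<Sum>c\<in>{1..t-1}. op_size (psi t n g c)) = n"
    proof -
      have "(\<Sum>c\<in>{1..t-1}. op_size (psi t n g c)) = (\<Sum>c\<in>{1..t-1}. \<Sum>s\<in>{1..n}. s * fst (g (s,c)))"
        using osz by simp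
      also have "\<dots> = (\<Sum>s\<in>{1..n}. \<Sum>c\<in>{1..t-1}. s * fst (g (s,c)))" by (rule sum.swap)
      also have "\<dots> = (\<Sum>i\<in>II t n. szz i (g i))"
        by (simp add: II_def sum.cartesian_product szz_def case_prod_beta)
      finally show ?thesis using gs by simp
    qed
    ultimately show ?thesis by (simp add: colored_overpartitions_def)
  qed
qed


subsection \<open>The vanishing of the twisted sum\<close>

lemma FF_L:
  assumes s: "0 < s"
  shows "FF (szz (s,c)) (wtt z (s,c)) VV = L (z^c) s"
proof (rule fps_ext)
  fix k
  have "(\<Sum>v\<in>{v\<in>VV. szz (s,c) v = k}. wtt z (s,c) v) = L (z^c) s $ k"
  proof (cases "k = 0")
    case True
    have "{v\<in>VV. szz (s,c) v = k} = {(0,False)}" using True s by (auto simp: VV_def szz_def)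
    then show ?thesis using True by (simp add: L_def wtt_def)
  next
    case k0: False
    show ?thesis
    proof (cases "s dvd k")
      case True
      then obtain q where q: "k = s * q" by blast
      have "{v\<in>VV. szz (s,c) v = k} = {(q,False),(q,True)}" using q s k0 by (auto simp: VV_def szz_def)
      moreover have "k div s = q" using q s by simp
      ultimately show ?thesis using k0 True by (simp add: L_def wtt_def power_mult)
    next
      case False
      have e: "{v\<in>VV. szz (s,c) v = k} = {}" using False by (auto simp: VV_def szz_def)
      show ?thesis using False k0 by (simp only: e sum.empty) (simp add: L_def)
    qed
  qed
  thus "FF (szz (s,c)) (wtt z (s,c)) VV $ k = L (z^c) s $ k" by (simp add: FF_def)
qed

lemma fiber_finite:
  assumes "i \<in> II t n"
  shows "finite {v\<in>VV. szz i v = k}"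
proof -
  obtain s c where i: "i = (s,c)" "1 \<le> s" using assms by (auto simp: II_def)
  have "{v\<in>VV. szz i v = k} \<subseteq> {..k} \<times> UNIV"
  proof
    fix v assume "v \<in> {v\<in>VV. szz i v = k}"
    hence "s * fst v = k" using i by (simp add: szz_def)
    hence "fst v \<le> k" using i by (metis le_add2 mult_le_mono1 mult_1 le_add_diff_inverse)
    thus "v \<in> {..k} \<times> UNIV" by (cases v) auto
  qed
  moreover have "finite ({..k} \<times> (UNIV :: bool set))" by simp
  ultimately show ?thesis by (rule finite_subset)
qed

definition ts :: "nat \<Rightarrow> complex fps \<Rightarrow> bool" where
  "ts t f \<longleftrightarrow> (\<forall>k. \<not> t dvd k \<longrightarrow> f $ k = 0)"

lemma ts_mult: "ts t f \<Longrightarrow> ts t g \<Longrightarrow> ts t (f*g)"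
  unfolding ts_def fps_mult_nth
proof (intro allI impI sum.neutral ballI)
  fix k i assume f: "\<forall>k. \<not> t dvd k \<longrightarrow> f $ k = 0" and g: "\<forall>k. \<not> t dvd k \<longrightarrow> g $ k = 0"
    and k: "\<not> t dvd k" and i: "i \<in> {0..k}"
  show "f $ i * g $ (k - i) = 0"
  proof (cases "t dvd i")
    case True
    hence "\<not> t dvd (k - i)" using k i by (metis atLeastAtMost_iff dvd_add le_add_diff_inverse)
    then show ?thesis using g by simp
  qed (use f in simp)
qed

lemma ts_prod: "(\<And>x. x \<in> A \<Longrightarrow> ts t (f x)) \<Longrightarrow> ts t (prod f A)"
proof (induction A rule: infinite_finite_induct)
  case (infinite A)
  then show ?case by (auto simp: ts_def)
next
  case empty
  then show ?case by (auto simp: ts_def)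
next
  case (insert x F)
  then show ?case by (simp add: ts_mult)
qed

lemma ts_L: "ts t (L 1 (t*s))"
  unfolding ts_def L_def by (auto dest: dvd_mult_left)

lemma prime_root:
  fixes z :: complex
  assumes "prime t" "z^t = 1" "z^d = 1" "0 < d" "d < t"
  shows "z = 1"
proof -
  have "\<not> t dvd d" using assms(4,5) by (auto dest: dvd_imp_le)
  hence "coprime t d" using assms(1) by (simp add: prime_imp_coprime)
  hence "coprime d t" by (simp only: coprime_commute)
  hence g: "gcd d t = 1" by (rule coprime_iff_gcd_eq_1[THEN iffD1])
  obtain x y where "d * x = t * y + gcd d t" using bezout_nat[of d t] assms(4) by auto
  hence "d * x = t * y + 1" using g by simp
  hence "z^(d*x) = z^(t*y) * z" by (simp add: power_add)
  thus ?thesis using assms(2,3) by (simp add: power_mult)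
qed

lemma roots_image:
  fixes z :: complex
  assumes "prime t" "z^t = 1" "z \<noteq> 1"
  shows "bij_betw (\<lambda>c. z^c) {1..t-1} (RU t - {1})"
proof -
  have t1: "1 < t" by (rule prime_gt_1_nat[OF assms(1)])
  have inj: "inj_on (\<lambda>c. z^c) {1..t-1}"
  proof (rule inj_onI)
    fix a b assume a: "a \<in> {1..t-1}" and b: "b \<in> {1..t-1}" and e: "z^a = z^b"
    show "a = b"
    proof (rule ccontr)
      assume "a \<noteq> b"
      hence "a < b \<or> b < a" by auto
      then show False
      proof
        assume ab: "a < b"
        have z0: "z \<noteq> 0" using assms(2) t1 by (auto simp: zero_power)
        have "z^a * z^(b-a) = z^b" using ab by (simp add: power_add[symmetric])
        hence "z^a * z^(b-a) = z^a * 1" using e by simp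
        hence "z^(b-a) = 1" using z0 by simp
        moreover have "0 < b - a" "b - a < t" using ab b by auto
        ultimately show False using prime_root[OF assms(1,2)] assms(3) by blast
      next
        assume ab: "b < a"
        have z0: "z \<noteq> 0" using assms(2) t1 by (auto simp: zero_power)
        have "z^b * z^(a-b) = z^a" using ab by (simp add: power_add[symmetric])
        hence "z^b * z^(a-b) = z^b * 1" using e by simp
        hence "z^(a-b) = 1" using z0 by simp
        moreover have "0 < a - b" "a - b < t" using ab a by auto
        ultimately show False using prime_root[OF assms(1,2)] assms(3) by blast
      qed
    qed
  qed
  have sub: "(\<lambda>c. z^c) ` {1..t-1} \<subseteq> RU t - {1}"
  proof
    fix w assume "w \<in> (\<lambda>c. z^c) ` {1..t-1}"
    then obtain c where c: "c \<in> {1..t-1}" "w = z^c" by auto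
    have "(z^c)^t = (z^t)^c" by (simp only: power_mult[symmetric] mult.commute)
    hence "w^t = 1" using c assms(2) by simp
    moreover have ct: "0 < c" "c < t" using c t1 by auto
    have "w \<noteq> 1" using c(2) prime_root[OF assms(1,2) _ ct] assms(3) by auto
    ultimately show "w \<in> RU t - {1}" by (simp add: RU_def)
  qed
  have "card ((\<lambda>c. z^c) ` {1..t-1}) = card (RU t - {1})"
    using inj RU_card[of t] RU_1[of t] RU_finite[of t] t1 by (simp add: card_image)
  hence "(\<lambda>c. z^c) ` {1..t-1} = RU t - {1}"
    using sub RU_finite[of t] t1 by (intro card_subset_eq) auto
  thus ?thesis using inj by (simp add: bij_betw_def)
qed

lemma vanish:
  fixes z :: complex
  assumes t: "prime t" "odd t" and nq: "\<not> QuadRes (int t) (int n)" and z: "z^t = 1" "z \<noteq> 1"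
  shows "(\<Sum>F\<in>colored_overpartitions t n. z powi (multirank t F)) = 0"
proof -
  have t1: "1 < t" by (rule prime_gt_1_nat[OF t(1)])
  have finI: "finite (II t n)" by (simp add: II_def)
  have "(\<Sum>F\<in>colored_overpartitions t n. z powi (multirank t F))
      = (\<Prod>i\<in>II t n. FF (szz i) (wtt z i) VV) $ n"
    using colored_sum[OF t(2) t1 z(1)] gf_prod[OF finI fiber_finite] by simp
  also have "(\<Prod>i\<in>II t n. FF (szz i) (wtt z i) VV) = (\<Prod>s\<in>{1..n}. \<Prod>c\<in>{1..t-1}. L (z^c) s)"
    unfolding II_def prod.cartesian_product
    by (intro prod.cong refl) (auto simp: FF_L split: prod.splits)
  also have "\<dots> = (\<Prod>s\<in>{1..n}. L 1 (t*s) * L (-1) s)"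
  proof (intro prod.cong refl)
    fix s assume s: "s \<in> {1..n}"
    have "(\<Prod>c\<in>{1..t-1}. L (z^c) s) = (\<Prod>w\<in>RU t - {1}. L w s)"
      using prod.reindex_bij_betw[OF roots_image[OF t(1) z], of "\<lambda>w. L w s"] by simp
    also have "\<dots> = L 1 (t*s) * L (-1) s" using s t1 t(2) by (intro L_prod) auto
    finally show "(\<Prod>c\<in>{1..t-1}. L (z^c) s) = L 1 (t*s) * L (-1) s" .
  qed
  also have "\<dots> = (\<Prod>s\<in>{1..n}. L 1 (t*s)) * Dm n" by (simp add: prod.distrib Dm_def)
  finally have eq: "(\<Sum>F\<in>colored_overpartitions t n. z powi (multirank t F)) = ((\<Prod>s\<in>{1..n}. L 1 (t*s)) * Dm n) $ n" .
  have tsE: "ts t (\<Prod>s\<in>{1..n}. L 1 (t*s))" by (intro ts_prod ts_L)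
  have "((\<Prod>s\<in>{1..n}. L 1 (t*s)) * Dm n) $ n = 0"
    unfolding fps_mult_nth
  proof (intro sum.neutral ballI)
    fix i assume i: "i \<in> {0..n}"
    show "(\<Prod>s\<in>{1..n}. L 1 (t*s)) $ i * Dm n $ (n - i) = 0"
    proof (cases "t dvd i")
      case False
      then show ?thesis using tsE by (simp add: ts_def)
    next
      case True
      have "\<forall>a. n - i \<noteq> a^2"
      proof
        fix a show "n - i \<noteq> a^2"
        proof
          assume a: "n - i = a^2"
          obtain q where q: "i = t * q" using True by blast
          have nn: "n = a^2 + t*q" using a q i by auto
          have "int n = int (a^2) + int t * int q" by (simp add: nn)
          hence "[int a ^ 2 = int n] (mod int t)"
            by (simp add: cong_iff_dvd_diff) 
          hence "QuadRes (int t) (int n)" unfolding QuadRes_def by blast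
          thus False using nq by simp
        qed
      qed
      hence "Dm n $ (n - i) = 0" by (intro D_coeff) auto
      then show ?thesis by simp
    qed
  qed
  with eq show ?thesis by simp
qed

lemma colored_phi:
  assumes F: "F \<in> colored_overpartitions t n"
  shows "psi t n (phi t n F) = F" "phi t n F \<in> GG (II t n) szz VV n"
proof -
  have FE: "F \<in> {1..t-1} \<rightarrow>\<^sub>E Collect is_overpartition" using F by (simp add: colored_overpartitions_def)
  have Fs: "(\<Sum>k\<in>{1..t-1}. op_size (F k)) = n" using F by (simp add: colored_overpartitions_def)
  show "psi t n (phi t n F) = F"
  proof
    fix c show "psi t n (phi t n F) c = F c"
    proof (cases "c \<in> {1..t-1}")
      case True
      have pf: "phi t n F (s,c) = (count (fst (F c)) s, s \<in> snd (F c))" if "s \<in> {1..n}" for s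
        using that True by (simp add: phi_def II_def)
      have a: "(\<Sum>s\<in>{1..n}. replicate_mset (fst (phi t n F (s,c))) s) = fst (F c)"
      proof -
        have "(\<Sum>s\<in>{1..n}. replicate_mset (fst (phi t n F (s,c))) s) = (\<Sum>s\<in>{1..n}. replicate_mset (count (fst (F c)) s) s)"
          by (intro sum.cong refl) (simp add: pf)
        also have "\<dots> = fst (F c)" using mset_decomp[OF _ colored_parts(1)[OF F True]] by simp
        finally show ?thesis .
      qed
      have b: "{s\<in>{1..n}. snd (phi t n F (s,c))} = snd (F c)"
        using colored_parts(1,2)[OF F True] pf by auto
      show ?thesis using True a b by (simp add: psi_def prod_eq_iff)
    next
      case False
      then show ?thesis using FE by (auto simp: psi_def PiE_def extensional_def)
    qed
  qed
  show "phi t n F \<in> GG (II t n) szz VV n"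
  proof -
    have "phi t n F \<in> II t n \<rightarrow>\<^sub>E VV"
    proof -
      have "(count (fst (F c)) s, s \<in> snd (F c)) \<in> VV" if "(s,c) \<in> II t n" for s c
        using colored_parts(2)[of F t n c] F that by (auto simp: VV_def II_def)
      thus ?thesis by (auto simp: phi_def)
    qed
    moreover have "(\<Sum>i\<in>II t n. szz i (phi t n F i)) = n"
    proof -
      have "(\<Sum>i\<in>II t n. szz i (phi t n F i)) = (\<Sum>(s,c)\<in>{1..n} \<times> {1..t-1}. s * count (fst (F c)) s)"
        unfolding II_def by (intro sum.cong refl) (auto simp: szz_def phi_def II_def)
      also have "\<dots> = (\<Sum>s\<in>{1..n}. \<Sum>c\<in>{1..t-1}. s * count (fst (F c)) s)"
        by (simp add: sum.cartesian_product)
      also have "\<dots> = (\<Sum>c\<in>{1..t-1}. \<Sum>s\<in>{1..n}. count (fst (F c)) s * s)"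
        by (subst sum.swap) (simp add: mult.commute)
      also have "\<dots> = (\<Sum>c\<in>{1..t-1}. op_size (F c))"
        using sum_mset_count[OF _ colored_parts(1)[OF F]] by (simp add: op_size_def)
      finally show ?thesis using Fs by simp
    qed
    ultimately show ?thesis by (simp add: GG_def)
  qed
qed

lemma colored_finite: "finite (colored_overpartitions t n)"
proof -
  have "colored_overpartitions t n \<subseteq> psi t n ` GG (II t n) szz VV n"
    using colored_phi by (metis image_eqI subsetI)
  moreover have "finite (GG (II t n) szz VV n)"
    by (intro GG_finite fiber_finite) (auto simp: II_def)
  ultimately show ?thesis by (meson finite_surj)
qed


subsection \<open>Roots of unity filter\<close>

definition om :: "nat \<Rightarrow> complex" where "om t = cis (2*pi / real t)"

lemma om_pow: "om t ^ k = cis (2*pi*real k / real t)"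
  by (simp add: om_def DeMoivre mult_ac)

lemma om_t: "0 < t \<Longrightarrow> om t ^ t = 1"
proof -
  assume "0 < t"
  hence "2*pi*real t / real t = 2*pi" by simp
  thus ?thesis by (simp add: om_pow complex_eq_iff)
qed

lemma om_nz: "om t \<noteq> 0" by (simp add: om_def)

lemma om_powi_mod:
  assumes t: "0 < t"
  shows "om t powi a = om t ^ nat (a mod int t)"
proof -
  have a: "a = int t * (a div int t) + a mod int t" by simp
  have "om t powi (int t * (a div int t)) = 1"
    by (simp add: power_int_mult om_t[OF t])
  hence "om t powi a = om t powi (a mod int t)"
    using om_nz by (subst a, subst power_int_add) auto
  also have "\<dots> = om t ^ nat (a mod int t)"
  proof -
    have "a mod int t = int (nat (a mod int t))" using t by simp
    thus ?thesis by (metis power_int_of_nat)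
  qed
  finally show ?thesis .
qed

lemma om_pow_one:
  assumes t: "0 < t"
  shows "om t powi a = 1 \<longleftrightarrow> int t dvd a"
proof
  assume "int t dvd a"
  hence "a mod int t = 0" by simp
  thus "om t powi a = 1" using om_powi_mod[OF t, of a] by simp
next
  assume h: "om t powi a = 1"
  define k where "k = nat (a mod int t)"
  have k: "k < t" using t by (simp add: k_def nat_less_iff)
  have "cis (2*pi*real k / real t) = cis (2*pi*real (0::nat) / real t)"
    using h om_powi_mod[OF t, of a] by (simp add: k_def om_pow)
  hence "k = 0" using bij_betw_roots_unity[OF t] k t unfolding bij_betw_def inj_on_def by blast
  hence "nat (a mod int t) = 0" by (simp add: k_def)
  hence "a mod int t \<le> 0" by simp
  moreover have "0 \<le> a mod int t" using t by simp
  ultimately have "a mod int t = 0" by linarith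
  thus "int t dvd a" by (simp add: dvd_eq_mod_eq_0)
qed

lemma root_sum:
  assumes t: "0 < t"
  shows "(\<Sum>j<t. (om t ^ j) powi a) = (if int t dvd a then of_nat t else 0)"
proof -
  define u where "u = om t powi a"
  have uj: "(om t ^ j) powi a = u ^ j" for j
  proof -
    have "(om t ^ j) powi a = (om t powi int j) powi a" by simp
    also have "\<dots> = om t powi (int j * a)" by (simp only: power_int_mult)
    also have "\<dots> = om t powi (a * int j)" by (simp only: mult.commute)
    also have "\<dots> = (om t powi a) powi (int j)" by (simp only: power_int_mult)
    also have "\<dots> = (om t powi a) ^ j" by (simp only: power_int_of_nat)
    finally show ?thesis by (simp add: u_def)
  qed
  show ?thesis
  proof (cases "int t dvd a")
    case True
    hence "u = 1" using om_pow_one[OF t] by (simp add: u_def)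
    then show ?thesis using True by (simp add: uj)
  next
    case False
    hence u1: "u \<noteq> 1" using om_pow_one[OF t] by (simp add: u_def)
    have "u ^ t = (om t ^ t) powi a" by (simp add: u_def power_int_mult[symmetric] mult.commute flip: power_int_of_nat)
    hence ut: "u ^ t = 1" using om_t[OF t] by simp
    have "(\<Sum>j<t. u ^ j) = (u ^ t - 1) / (u - 1)" using u1 by (rule geometric_sum)
    then show ?thesis using False ut by (simp add: uj)
  qed
qed

lemma count_formula:
  assumes t: "prime t" "odd t" and nq: "\<not> QuadRes (int t) (int n)"
  shows "of_nat t * of_nat (Nbar i t n) = (of_nat (pbar t n) :: complex)"
proof -
  define C where "C = colored_overpartitions t n"
  have fin: "finite C" unfolding C_def by (rule colored_finite)
  have t0: "0 < t" using prime_gt_1_nat[OF t(1)] by simp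
  have "(of_nat (Nbar i t n) :: complex) = (\<Sum>F\<in>C. if int t dvd (multirank t F - i) then 1 else 0)"
  proof -
    have "{F \<in> C. [multirank t F = i] (mod int t)} = {F \<in> C. int t dvd (multirank t F - i)}"
      by (simp add: cong_iff_dvd_diff)
    hence "Nbar i t n = card {F \<in> C. int t dvd (multirank t F - i)}" by (simp add: Nbar_def C_def)
    thus ?thesis using fin by (simp add: sum.inter_filter[symmetric])
  qed
  hence "of_nat t * (of_nat (Nbar i t n) :: complex) = (\<Sum>F\<in>C. \<Sum>j<t. (om t ^ j) powi (multirank t F - i))"
    by (simp add: sum_distrib_left root_sum[OF t0] if_distrib cong: if_cong)
  also have "\<dots> = (\<Sum>j<t. \<Sum>F\<in>C. (om t ^ j) powi (multirank t F - i))" by (rule sum.swap)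
  also have "\<dots> = (\<Sum>j<t. (om t ^ j) powi (-i) * (\<Sum>F\<in>C. (om t ^ j) powi (multirank t F)))"
  proof (intro sum.cong refl)
    fix j
    have nz: "om t ^ j \<noteq> 0" using om_nz by simp
    show "(\<Sum>F\<in>C. (om t ^ j) powi (multirank t F - i)) = (om t ^ j) powi (-i) * (\<Sum>F\<in>C. (om t ^ j) powi (multirank t F))"
      unfolding sum_distrib_left
    proof (intro sum.cong refl)
      fix F
      have "multirank t F - i = -i + multirank t F" by simp
      thus "(om t ^ j) powi (multirank t F - i) = (om t ^ j) powi (-i) * (om t ^ j) powi (multirank t F)"
        by (simp only: power_int_add[OF disjI1[OF nz]])
    qed
  qed
  also have "\<dots> = of_nat (pbar t n)"
  proof -
    obtain t' where t': "t = Suc t'" using t0 by (cases t) auto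
    have "(\<Sum>j<t. (om t ^ j) powi (-i) * (\<Sum>F\<in>C. (om t ^ j) powi (multirank t F)))
        = (\<Sum>F\<in>C. 1) + (\<Sum>j<t'. (om t ^ Suc j) powi (-i) * (\<Sum>F\<in>C. (om t ^ Suc j) powi (multirank t F)))"
      unfolding t' by (subst sum.lessThan_Suc_shift) simp
    also have "(\<Sum>j<t'. (om t ^ Suc j) powi (-i) * (\<Sum>F\<in>C. (om t ^ Suc j) powi (multirank t F))) = 0"
    proof (intro sum.neutral ballI)
      fix j assume j: "j \<in> {..<t'}"
      have "(om t ^ Suc j) ^ t = (om t ^ t) ^ Suc j" by (simp only: power_mult[symmetric] mult.commute)
      hence "(om t ^ Suc j) ^ t = 1" using om_t[OF t0] by simp
      moreover have "om t ^ Suc j \<noteq> 1"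
      proof
        assume "om t ^ Suc j = 1"
        hence "om t powi int (Suc j) = 1" by (simp only: power_int_of_nat)
        hence "int t dvd int (Suc j)" using om_pow_one[OF t0] by blast
        hence "t dvd Suc j" by (simp only: int_dvd_int_iff)
        thus False using j t' by (auto dest: dvd_imp_le)
      qed
      ultimately have "(\<Sum>F\<in>C. (om t ^ Suc j) powi (multirank t F)) = 0"
        unfolding C_def using vanish[OF t nq] by blast
      thus "(om t ^ Suc j) powi (-i) * (\<Sum>F\<in>C. (om t ^ Suc j) powi (multirank t F)) = 0" by simp
    qed
    finally show ?thesis by (simp add: C_def pbar_def)
  qed
  finally show ?thesis .
qed

definition ev2 :: "complex \<Rightarrow> bool" where "ev2 x \<longleftrightarrow> (\<exists>m::int. x = 2 * of_int m)"
definition isint :: "complex \<Rightarrow> bool" where "isint x \<longleftrightarrow> (\<exists>m::int. x = of_int m)"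
definition P2 :: "complex fps \<Rightarrow> bool" where
  "P2 f \<longleftrightarrow> f $ 0 = 1 \<and> (\<forall>k. isint (f $ k)) \<and> (\<forall>k>0. ev2 (f $ k))"

lemma ev2_0[simp]: "ev2 0" unfolding ev2_def by (intro exI[of _ "0::int"]) simp
lemma isint_0[simp]: "isint 0" unfolding isint_def by (intro exI[of _ "0::int"]) simp
lemma isint_1[simp]: "isint 1" unfolding isint_def by (intro exI[of _ "1::int"]) simp

lemma ev2_add: assumes "ev2 x" "ev2 y" shows "ev2 (x + y)"
proof -
  obtain a where a: "x = 2 * of_int a" using assms(1) by (auto simp: ev2_def)
  obtain b where b: "y = 2 * of_int b" using assms(2) by (auto simp: ev2_def)
  show ?thesis unfolding ev2_def by (rule exI[of _ "a+b"]) (simp add: a b algebra_simps)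
qed

lemma isint_add: assumes "isint x" "isint y" shows "isint (x + y)"
proof -
  obtain a where a: "x = of_int a" using assms(1) by (auto simp: isint_def)
  obtain b where b: "y = of_int b" using assms(2) by (auto simp: isint_def)
  show ?thesis unfolding isint_def by (rule exI[of _ "a+b"]) (simp add: a b)
qed

lemma ev2_mult: assumes "ev2 x" "isint y" shows "ev2 (x * y)"
proof -
  obtain a where a: "x = 2 * of_int a" using assms(1) by (auto simp: ev2_def)
  obtain b where b: "y = of_int b" using assms(2) by (auto simp: isint_def)
  show ?thesis unfolding ev2_def by (rule exI[of _ "a*b"]) (simp add: a b)
qed

lemma isint_mult: assumes "isint x" "isint y" shows "isint (x * y)"
proof -
  obtain a where a: "x = of_int a" using assms(1) by (auto simp: isint_def)
  obtain b where b: "y = of_int b" using assms(2) by (auto simp: isint_def)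
  show ?thesis unfolding isint_def by (rule exI[of _ "a*b"]) (simp add: a b)
qed

lemma ev2_sum: "(\<And>x. x \<in> A \<Longrightarrow> ev2 (f x)) \<Longrightarrow> ev2 (sum f A)"
  by (induction A rule: infinite_finite_induct) (auto intro: ev2_add)

lemma isint_sum: "(\<And>x. x \<in> A \<Longrightarrow> isint (f x)) \<Longrightarrow> isint (sum f A)"
  by (induction A rule: infinite_finite_induct) (auto intro: isint_add)

lemma P2_mult: "P2 f \<Longrightarrow> P2 g \<Longrightarrow> P2 (f * g)"
  unfolding P2_def
proof (intro conjI allI impI)
  assume f: "f $ 0 = 1 \<and> (\<forall>k. isint (f $ k)) \<and> (\<forall>k>0. ev2 (f $ k))"
     and g: "g $ 0 = 1 \<and> (\<forall>k. isint (g $ k)) \<and> (\<forall>k>0. ev2 (g $ k))"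
  show "(f * g) $ 0 = 1" using f g by simp
  fix k
  show "isint ((f * g) $ k)" unfolding fps_mult_nth using f g by (intro isint_sum isint_mult) auto
  assume k: "0 < k"
  show "ev2 ((f * g) $ k)" unfolding fps_mult_nth
  proof (intro ev2_sum)
    fix i assume i: "i \<in> {0..k}"
    show "ev2 (f $ i * g $ (k - i))"
    proof (cases "i = 0")
      case True
      then show ?thesis using f g k by (simp add: mult.commute)
    next
      case False
      then show ?thesis using f g by (intro ev2_mult) auto
    qed
  qed
qed

lemma P2_prod: "(\<And>x. x \<in> A \<Longrightarrow> P2 (f x)) \<Longrightarrow> P2 (prod f A)"
proof (induction A rule: infinite_finite_induct)
  case (infinite A) then show ?case by (simp add: P2_def)
next
  case empty then show ?case by (simp add: P2_def)
next
  case (insert x F) then show ?case by (simp add: P2_mult)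
qed

lemma ev2_2[simp]: "ev2 2" unfolding ev2_def by (intro exI[of _ "1::int"]) simp
lemma isint_2[simp]: "isint 2" unfolding isint_def by (intro exI[of _ "2::int"]) simp

lemma P2_L: "P2 (L 1 s)"
  unfolding P2_def L_def by auto

lemma pbar_even:
  assumes t: "odd t" "1 < t" and n: "1 \<le> n"
  shows "even (pbar t n)"
proof -
  have finI: "finite (II t n)" by (simp add: II_def)
  have "(of_nat (pbar t n) :: complex) = (\<Sum>F\<in>colored_overpartitions t n. (1::complex) powi (multirank t F))"
    by (simp add: pbar_def)
  also have "\<dots> = (\<Prod>i\<in>II t n. FF (szz i) (wtt 1 i) VV) $ n"
    using colored_sum[OF t, of 1] gf_prod[OF finI fiber_finite] by simp
  finally have e: "(of_nat (pbar t n) :: complex) = (\<Prod>i\<in>II t n. FF (szz i) (wtt 1 i) VV) $ n" .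
  have "P2 (\<Prod>i\<in>II t n. FF (szz i) (wtt 1 i) VV)"
  proof (intro P2_prod)
    fix i assume "i \<in> II t n"
    then obtain s c where i: "i = (s,c)" "0 < s" by (auto simp: II_def)
    show "P2 (FF (szz i) (wtt 1 i) VV)" using FF_L[OF i(2), of c 1] P2_L i(1) by simp
  qed
  hence "ev2 ((of_nat (pbar t n) :: complex))" using e n by (simp add: P2_def)
  then obtain m :: int where "(of_nat (pbar t n) :: complex) = 2 * of_int m" by (auto simp: ev2_def)
  hence "(of_int (int (pbar t n)) :: complex) = of_int (2 * m)" by simp
  hence "int (pbar t n) = 2 * m" by (simp only: of_int_eq_iff)
  thus ?thesis by presburger
qed

theorem theorem2p3:
  fixes t n :: nat
  assumes "prime t" and "odd t" and "n \<ge> 1"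
    and "\<not> QuadRes (int t) (int n)"
  shows "(\<forall>i::int. 0 \<le> i \<and> i \<le> int t - 1 \<longrightarrow>
            real (Nbar i t n) = real (pbar t n) / real t \<and> even (Nbar i t n))
         \<and> (2 * t) dvd pbar t n"
proof -
  have t1: "1 < t" by (rule prime_gt_1_nat[OF assms(1)])
  have N: "t * Nbar i t n = pbar t n" for i
  proof -
    have "(of_nat (t * Nbar i t n) :: complex) = of_nat (pbar t n)"
      using count_formula[OF assms(1,2,4), of i] by simp
    thus ?thesis by (simp only: of_nat_eq_iff)
  qed
  have E: "even (pbar t n)" using pbar_even[OF assms(2) t1 assms(3)] .
  have NE: "even (Nbar i t n)" for i
    using E N[of i] assms(2) by (metis even_mult_iff)
  show ?thesis
  proof (intro conjI allI impI)
    fix i :: int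
    show "real (Nbar i t n) = real (pbar t n) / real t"
      using N[of i] t1 by (simp add: field_simps flip: of_nat_mult)
    show "even (Nbar i t n)" by (rule NE)
  next
    obtain k where "Nbar 0 t n = 2 * k" using NE[of 0] by blast
    hence "pbar t n = (2 * t) * k" using N[of 0] by simp
    thus "(2 * t) dvd pbar t n" by simp
  qed
qed

end
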